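(* Let $(R,d)$ be a differential ring having Property (P). (i) For any morphism $\varphi:M\to N$ of finite free differential modules over $R$, the kernel and cokernel of $\varphi$ (as differential modules) are again finite free; consequently the category of finite free differential modules over $R$ is an abelian subcategory of the category of differential modules over $R$. (ii) If $\varphi:M\to N$ is an injective morphism of finite free differential modules over $R$ and $M$, $N$ have the same rank, then $\varphi$ is an isomorphism. (iii) If $\varphi:M\to N$ is an injective morphism of finite free differential modules over $R$, then $\wedge^n\varphi:\wedge^nM\to\wedge^nN$ is injective for every $n\in\mathbb N$.
   Context: A differential ring is a commutative ring $R$ with a derivation $d$. A differential module over $R$ is an $R$-module $M$ with an additive map $D$ satisfying $D(rx)=d(r)x+rD(x)$; morphisms are $R$-linear maps commuting with $D$; it is finite free of rank $m$ if the underlying module is. Exterior powers carry $D(x_1\wedge\dots\wedge x_n)=\sum_i x_1\wedge\dots\wedge D(x_i)\wedge\dots\wedge x_n$. A ring is an elementary divisor ring if every matrix $A\in M_{m\times n}(R)$ can be brought, by multiplication by invertible matrices on both sides, to a diagonal matrix with diagonal entries $d_1\mid d_2\mid\dots\mid d_{\min(m,n)}$; an elementary divisor domain is such an integral domain. $R$ satisfies Condition (S) if every principal ideal $I$ with $d(I)\subset I$ is $(0)$ or $(1)$. Property (P): $R$ is an elementary divisor domain satisfying Condition (S). *)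

theory Defs
  imports "Jordan_Normal_Form.Determinant"
begin

definition derivation :: "('a::comm_ring_1 \<Rightarrow> 'a) \<Rightarrow> bool" where
  "derivation d \<longleftrightarrow> (\<forall>a b. d (a + b) = d a + d b) \<and> (\<forall>a b. d (a * b) = d a * b + a * d b)"

definition elementary_divisor_ring :: "'a::comm_ring_1 itself \<Rightarrow> bool" where
  "elementary_divisor_ring _ \<longleftrightarrow>
     (\<forall>m n (A :: 'a mat). A \<in> carrier_mat m n \<longrightarrow>
        (\<exists>P Q. P \<in> carrier_mat m m \<and> invertible_mat P \<and>
               Q \<in> carrier_mat n n \<and> invertible_mat Q \<and>
               (\<forall>i<m. \<forall>j<n. i \<noteq> j \<longrightarrow> (P * A * Q) $$ (i, j) = 0) \<and>
               (\<forall>i. Suc i < min m n \<longrightarrow> (P * A * Q) $$ (i, i) dvd (P * A * Q) $$ (Suc i, Suc i))))"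

definition condition_S :: "('a::comm_ring_1 \<Rightarrow> 'a) \<Rightarrow> bool" where
  "condition_S d \<longleftrightarrow>
     (\<forall>a. let I = {a * r | r. True} in d ` I \<subseteq> I \<longrightarrow> I = {0} \<or> I = UNIV)"

definition property_P :: "('a::idom \<Rightarrow> 'a) \<Rightarrow> bool" where
  "property_P d \<longleftrightarrow> elementary_divisor_ring TYPE('a) \<and> condition_S d"

text \<open>The free module R^m, as functions nat => R vanishing from index m on.\<close>
definition fvec :: "nat \<Rightarrow> (nat \<Rightarrow> 'a::zero) set" where
  "fvec m = {x. \<forall>i\<ge>m. x i = 0}"

definition vsmult :: "'a::times \<Rightarrow> (nat \<Rightarrow> 'a) \<Rightarrow> (nat \<Rightarrow> 'a)" where
  "vsmult r x = (\<lambda>i. r * x i)"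

definition vadd :: "('b \<Rightarrow> 'a::plus) \<Rightarrow> ('b \<Rightarrow> 'a) \<Rightarrow> ('b \<Rightarrow> 'a)" where
  "vadd x y = (\<lambda>i. x i + y i)"

definition vzero :: "'b \<Rightarrow> 'a::zero" where
  "vzero = (\<lambda>_. 0)"

definition diff_module :: "('a::comm_ring_1 \<Rightarrow> 'a) \<Rightarrow> nat \<Rightarrow> ((nat \<Rightarrow> 'a) \<Rightarrow> (nat \<Rightarrow> 'a)) \<Rightarrow> bool" where
  "diff_module d m D \<longleftrightarrow>
     (\<forall>x\<in>fvec m. D x \<in> fvec m) \<and>
     (\<forall>x\<in>fvec m. \<forall>y\<in>fvec m. D (vadd x y) = vadd (D x) (D y)) \<and>
     (\<forall>r. \<forall>x\<in>fvec m. D (vsmult r x) = vadd (vsmult (d r) x) (vsmult r (D x)))"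

definition rlinear :: "nat \<Rightarrow> nat \<Rightarrow> ((nat \<Rightarrow> 'a::comm_ring_1) \<Rightarrow> (nat \<Rightarrow> 'a)) \<Rightarrow> bool" where
  "rlinear m n \<phi> \<longleftrightarrow>
     (\<forall>x\<in>fvec m. \<phi> x \<in> fvec n) \<and>
     (\<forall>x\<in>fvec m. \<forall>y\<in>fvec m. \<phi> (vadd x y) = vadd (\<phi> x) (\<phi> y)) \<and>
     (\<forall>r. \<forall>x\<in>fvec m. \<phi> (vsmult r x) = vsmult r (\<phi> x))"

definition dm_morphism :: "nat \<Rightarrow> ((nat \<Rightarrow> 'a::comm_ring_1) \<Rightarrow> (nat \<Rightarrow> 'a)) \<Rightarrow> nat \<Rightarrow> ((nat \<Rightarrow> 'a) \<Rightarrow> (nat \<Rightarrow> 'a))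
    \<Rightarrow> ((nat \<Rightarrow> 'a) \<Rightarrow> (nat \<Rightarrow> 'a)) \<Rightarrow> bool" where
  "dm_morphism m DM n DN \<phi> \<longleftrightarrow> rlinear m n \<phi> \<and> (\<forall>x\<in>fvec m. \<phi> (DM x) = DN (\<phi> x))"

definition lincomb :: "nat \<Rightarrow> (nat \<Rightarrow> 'a::comm_ring_1) \<Rightarrow> (nat \<Rightarrow> nat \<Rightarrow> 'a) \<Rightarrow> (nat \<Rightarrow> 'a)" where
  "lincomb k c B = (\<lambda>j. \<Sum>i<k. c i * B i j)"

definition dm_kernel :: "nat \<Rightarrow> ((nat \<Rightarrow> 'a::comm_ring_1) \<Rightarrow> (nat \<Rightarrow> 'a)) \<Rightarrow> (nat \<Rightarrow> 'a) set" where
  "dm_kernel m \<phi> = {x \<in> fvec m. \<phi> x = vzero}"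

definition free_submodule :: "(nat \<Rightarrow> 'a::comm_ring_1) set \<Rightarrow> bool" where
  "free_submodule S \<longleftrightarrow>
     (\<exists>k B. (\<forall>i<k. B i \<in> S) \<and>
            (\<forall>c. lincomb k c B = vzero \<longrightarrow> (\<forall>i<k. c i = 0)) \<and>
            (\<forall>x\<in>S. \<exists>c. x = lincomb k c B))"

text \<open>The cokernel R^n / phi(R^m) is finite free: there are vectors C_0..C_(k-1) in R^n whose
  classes modulo the image form a basis of the quotient module.\<close>
definition free_cokernel :: "nat \<Rightarrow> nat \<Rightarrow> ((nat \<Rightarrow> 'a::comm_ring_1) \<Rightarrow> (nat \<Rightarrow> 'a)) \<Rightarrow> bool" where
  "free_cokernel m n \<phi> \<longleftrightarrow>
     (\<exists>k C. (\<forall>i<k. C i \<in> fvec n) \<and>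
            (\<forall>y\<in>fvec n. \<exists>c. \<exists>x\<in>fvec m. y = vadd (lincomb k c C) (\<phi> x)) \<and>
            (\<forall>c. lincomb k c C \<in> \<phi> ` fvec m \<longrightarrow> (\<forall>i<k. c i = 0)))"

text \<open>The n-th exterior power of R^m is free with basis e_I (I an n-subset of {0..<m});
  vectors are functions on index sets, vanishing outside the n-subsets.\<close>
definition nsubsets :: "nat \<Rightarrow> nat \<Rightarrow> nat set set" where
  "nsubsets m n = {I. I \<subseteq> {..<m} \<and> card I = n}"

definition ext_vec :: "nat \<Rightarrow> nat \<Rightarrow> (nat set \<Rightarrow> 'a::zero) set" where
  "ext_vec m n = {X. \<forall>I. I \<notin> nsubsets m n \<longrightarrow> X I = 0}"

definition unit_vec :: "nat \<Rightarrow> (nat \<Rightarrow> 'a::{zero,one})" where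
  "unit_vec i = (\<lambda>j. if j = i then 1 else 0)"

text \<open>Coordinates of x_0 /\ ... /\ x_(n-1) in the exterior power of R^p: the coefficient of
  e_J is the n x n minor with rows J (increasing) of the matrix with columns x_0..x_(n-1).\<close>
definition wedge :: "nat \<Rightarrow> nat \<Rightarrow> (nat \<Rightarrow> nat \<Rightarrow> 'a::comm_ring_1) \<Rightarrow> (nat set \<Rightarrow> 'a)" where
  "wedge p n xs = (\<lambda>J. if J \<in> nsubsets p n
       then det (mat n n (\<lambda>(a, b). xs b (sorted_list_of_set J ! a))) else 0)"

text \<open>The induced map on n-th exterior powers: the linear map sending e_I, I = {i_0 < ... < i_(n-1)},
  to phi(e_(i_0)) /\ ... /\ phi(e_(i_(n-1))).\<close>
definition ext_map :: "nat \<Rightarrow> nat \<Rightarrow> nat \<Rightarrow> ((nat \<Rightarrow> 'a::comm_ring_1) \<Rightarrow> (nat \<Rightarrow> 'a))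
    \<Rightarrow> (nat set \<Rightarrow> 'a) \<Rightarrow> (nat set \<Rightarrow> 'a)" where
  "ext_map m p n \<phi> X = (\<lambda>J. \<Sum>I\<in>nsubsets m n.
       X I * wedge p n (\<lambda>b. \<phi> (unit_vec (sorted_list_of_set I ! b))) J)"

end

theory Submission
  imports Defs
begin

definition colsub :: "'a mat \<Rightarrow> nat set \<Rightarrow> 'a mat" where
  "colsub F J = mat (dim_row F) (card J) (\<lambda>(i,j). F $$ (i, sorted_list_of_set J ! j))"
definition rowsub :: "'a mat \<Rightarrow> nat set \<Rightarrow> 'a mat" where
  "rowsub G J = mat (card J) (dim_col G) (\<lambda>(i,j). G $$ (sorted_list_of_set J ! i, j))"

definition pos :: "'b list \<Rightarrow> 'b \<Rightarrow> nat" where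
  "pos xs x = (THE i. i < length xs \<and> xs ! i = x)"

lemma pos_nth: "distinct xs \<Longrightarrow> i < length xs \<Longrightarrow> pos xs (xs ! i) = i"
  unfolding pos_def by (rule the_equality) (auto simp: nth_eq_iff_index_eq)

lemma pos_mem: assumes "distinct xs" "x \<in> set xs"
  shows "pos xs x < length xs" "xs ! pos xs x = x"
proof -
  have "\<exists>!i. i < length xs \<and> xs ! i = x" using distinct_Ex1[OF assms] .
  then have "pos xs x < length xs \<and> xs ! pos xs x = x" unfolding pos_def by (rule theI')
  then show "pos xs x < length xs" "xs ! pos xs x = x" by auto
qed

lemma nsubsets_finite: "finite (nsubsets p k)"
  unfolding nsubsets_def by (rule finite_subset[of _ "Pow {..<p}"]) auto

lemma nsub_props:
  assumes "J \<in> nsubsets p k"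
  shows "finite J" "card J = k" "J \<subseteq> {..<p}" "length (sorted_list_of_set J) = k"
    "distinct (sorted_list_of_set J)" "set (sorted_list_of_set J) = J"
    "\<And>i. i < k \<Longrightarrow> sorted_list_of_set J ! i < p"
proof -
  show f: "finite J" using assms unfolding nsubsets_def by (auto intro: finite_subset)
  show "card J = k" "J \<subseteq> {..<p}" using assms unfolding nsubsets_def by auto
  then show l: "length (sorted_list_of_set J) = k" by simp
  show "distinct (sorted_list_of_set J)" by simp
  show s: "set (sorted_list_of_set J) = J" using f by simp
  fix i assume "i < k"
  then have "sorted_list_of_set J ! i \<in> J" using l s nth_mem by metis
  then show "sorted_list_of_set J ! i < p" using \<open>J \<subseteq> {..<p}\<close> by auto
qed

lemma cauchy_binet:
  fixes F G :: "'a::comm_ring_1 mat"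
  assumes F: "F \<in> carrier_mat k p" and G: "G \<in> carrier_mat p k"
  shows "det (F * G) = (\<Sum>J\<in>nsubsets p k. det (colsub F J) * det (rowsub G J))"
proof -
  let ?U = "{0..<k}"
  let ?Fs = "{f. (\<forall>i\<in>?U. f i \<in> {0..<p}) \<and> (\<forall>i. i \<notin> ?U \<longrightarrow> f i = i)}"
  let ?Fi = "{f\<in>?Fs. inj_on f ?U}"
  let ?h = "\<lambda>f. (\<Prod>i\<in>?U. F $$ (i, f i)) * det (mat\<^sub>r k k (\<lambda>i. row G (f i)))"
  have finFs: "finite ?Fs" by (rule finite_bounded_functions) auto
  have "det (F * G) = det (mat\<^sub>r k k (\<lambda>i. finsum_vec TYPE('a) k (\<lambda>l. F $$ (i, l) \<cdot>\<^sub>v row G l) {0..<p}))"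
    using mat_mul_finsum_alt[OF F G] by simp
  also have "\<dots> = (\<Sum>f\<in>?Fs. det (mat\<^sub>r k k (\<lambda>i. F $$ (i, f i) \<cdot>\<^sub>v row G (f i))))"
    by (rule det_linear_rows_sum) (use G in auto)
  also have "\<dots> = (\<Sum>f\<in>?Fs. ?h f)"
  proof (rule sum.cong[OF refl])
    fix f assume f: "f \<in> ?Fs"
    show "det (mat\<^sub>r k k (\<lambda>i. F $$ (i, f i) \<cdot>\<^sub>v row G (f i))) = ?h f"
      by (rule det_rows_mul) (use G in auto)
  qed
  also have "\<dots> = (\<Sum>f\<in>?Fi. ?h f)"
  proof (rule sum.mono_neutral_right[OF finFs])
    show "?Fi \<subseteq> ?Fs" by auto
    show "\<forall>f\<in>?Fs - ?Fi. ?h f = 0"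
    proof
      fix f assume f: "f \<in> ?Fs - ?Fi"
      then obtain i j where ij: "f i = f j" "i \<noteq> j" "i < k" "j < k"
        unfolding inj_on_def by auto
      have "det (mat\<^sub>r k k (\<lambda>i. row G (f i))) = 0"
        by (rule det_identical_rows[OF _ ij(2-4)]) (use ij in auto)
      then show "?h f = 0" by simp
    qed
  qed
  also have "\<dots> = (\<Sum>(J,q)\<in>Sigma (nsubsets p k) (\<lambda>_. {q. q permutes ?U}).
      ?h (\<lambda>i. if i < k then sorted_list_of_set J ! q i else i))"
  proof -
    let ?bi = "\<lambda>(J::nat set,q::nat\<Rightarrow>nat) i::nat. if i < k then sorted_list_of_set J ! q i else i"
    let ?bj = "\<lambda>f::nat\<Rightarrow>nat. (f ` ?U, \<lambda>i. if i < k then pos (sorted_list_of_set (f ` ?U)) (f i) else i)"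
    have A: "?bj (?bi a) = a \<and> ?bi a \<in> ?Fi" if a: "a \<in> Sigma (nsubsets p k) (\<lambda>_. {q. q permutes ?U})" for a
    proof -
      obtain J q where aJ: "a = (J, q)" and J: "J \<in> nsubsets p k" and q: "q permutes ?U"
        using a by auto
      note JJ = nsub_props[OF J]
      let ?s = "sorted_list_of_set J"
      let ?f = "\<lambda>i. if i < k then ?s ! q i else i"
      have qk: "i < k \<Longrightarrow> q i < k" for i using q permutes_in_image by fastforce
      have img: "?f ` ?U = J"
      proof -
        have "?f ` ?U = (\<lambda>i. ?s ! i) ` (q ` ?U)" by (auto simp: image_iff)
        also have "q ` ?U = ?U" using q by (simp add: permutes_image)
        also have "(\<lambda>i. ?s ! i) ` ?U = set ?s" using JJ(4) by (auto simp: set_conv_nth)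
        finally show ?thesis using JJ(6) by simp
      qed
      have idx: "i < k \<Longrightarrow> pos ?s (?s ! q i) = q i" for i
        using qk JJ(4) JJ(5) pos_nth by blast
      have 1: "?bj (?bi a) = a"
        unfolding aJ using img idx q by (auto simp: fun_eq_iff permutes_def)
      have inj: "inj_on ?f ?U"
      proof (rule inj_onI)
        fix x y assume "x \<in> ?U" "y \<in> ?U" "?f x = ?f y"
        then have "?s ! q x = ?s ! q y" by simp
        then have "q x = q y" using nth_eq_iff_index_eq[OF JJ(5)] qk \<open>x \<in> ?U\<close> \<open>y \<in> ?U\<close> JJ(4) by auto
        then show "x = y" using q by (metis permutes_inj injD)
      qed
      have "?bi a \<in> ?Fi"
        unfolding aJ using inj JJ(7) qk by auto
      with 1 show ?thesis by blast
    qed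
    have B: "?bi (?bj f) = f \<and> ?bj f \<in> Sigma (nsubsets p k) (\<lambda>_. {q. q permutes ?U})" if f: "f \<in> ?Fi" for f
    proof -
      let ?J = "f ` ?U"
      let ?s = "sorted_list_of_set ?J"
      let ?q = "\<lambda>i. if i < k then pos ?s (f i) else i"
      have cardJ: "card ?J = k" using f card_image by fastforce
      have J: "?J \<in> nsubsets p k" using f cardJ unfolding nsubsets_def by auto
      note JJ = nsub_props[OF J]
      have fin: "i < k \<Longrightarrow> f i \<in> set ?s" for i using JJ(6) by auto
      have qk: "?q ` ?U \<subseteq> ?U" proof (rule image_subsetI)
        fix x assume "x \<in> ?U"
        then show "?q x \<in> ?U" using fin[of x] JJ(4) JJ(5) pos_mem(1)[of ?s "f x"] by auto
      qed
      have qinj: "inj_on ?q ?U"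
      proof (rule inj_onI)
        fix x y assume xy: "x \<in> ?U" "y \<in> ?U" "?q x = ?q y"
        then have "f x = f y" using fin JJ(5) pos_mem by (metis atLeastLessThan_iff)
        then show "x = y" using f xy by (auto dest: inj_onD)
      qed
      have "?q permutes ?U"
        by (rule inj_on_nat_permutes) (use qinj qk in auto)
      then have "?bj f \<in> Sigma (nsubsets p k) (\<lambda>_. {q. q permutes ?U})"
        using J by auto
      moreover have "?bi (?bj f) = f"
      proof
        fix x show "?bi (?bj f) x = f x"
          using fin[of x] f JJ(5) pos_mem(2)[of ?s "f x"] by auto
      qed
      ultimately show ?thesis by blast
    qed
    show ?thesis
    proof (rule sum.reindex_bij_witness[where i = ?bi and j = ?bj])
      fix a assume a: "a \<in> ?Fi"
      then have e: "?bi (?bj a) = a" using B by blast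
      obtain J q where Jq: "?bj a = (J,q)" by (cases "?bj a")
      show "(\<lambda>(J,q). ?h (\<lambda>i. if i < k then sorted_list_of_set J ! q i else i)) (?bj a) = ?h a"
        using e[symmetric] unfolding Jq by simp
    qed (use A B in blast)+
  qed
  also have "\<dots> = (\<Sum>J\<in>nsubsets p k. \<Sum>q\<in>{q. q permutes ?U}.
      ?h (\<lambda>i. if i < k then sorted_list_of_set J ! q i else i))"
    by (rule sum.Sigma[symmetric]) (auto simp: nsubsets_finite finite_permutations)
  also have "\<dots> = (\<Sum>J\<in>nsubsets p k. det (colsub F J) * det (rowsub G J))"
  proof (rule sum.cong[OF refl])
    fix J assume J: "J \<in> nsubsets p k"
    note JJ = nsub_props[OF J]
    let ?s = "sorted_list_of_set J"
    have R: "rowsub G J \<in> carrier_mat k k" using G JJ unfolding rowsub_def by auto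
    have C: "colsub F J \<in> carrier_mat k k" using F JJ unfolding colsub_def by auto
    have "(\<Sum>q\<in>{q. q permutes ?U}. ?h (\<lambda>i. if i < k then ?s ! q i else i))
       = (\<Sum>q\<in>{q. q permutes ?U}. (signof q * (\<Prod>i\<in>?U. colsub F J $$ (i, q i))) * det (rowsub G J))"
    proof (rule sum.cong[OF refl])
      fix q assume "q \<in> {q. q permutes ?U}"
      then have q: "q permutes ?U" by simp
      have qk: "i < k \<Longrightarrow> q i < k" for i using q permutes_in_image by fastforce
      have m: "mat\<^sub>r k k (\<lambda>i. row G (if i < k then ?s ! q i else i))
          = mat k k (\<lambda>(i,j). rowsub G J $$ (q i, j))"
        by (rule eq_matI) (use G JJ qk in \<open>auto simp: rowsub_def\<close>)
      have p: "(\<Prod>i\<in>?U. F $$ (i, if i < k then ?s ! q i else i)) = (\<Prod>i\<in>?U. colsub F J $$ (i, q i))"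
        by (rule prod.cong) (use F JJ qk in \<open>auto simp: colsub_def\<close>)
      show "?h (\<lambda>i. if i < k then ?s ! q i else i) = (signof q * (\<Prod>i\<in>?U. colsub F J $$ (i, q i))) * det (rowsub G J)"
        unfolding m p det_permute_rows[OF R q] by (simp add: ac_simps)
    qed
    also have "\<dots> = det (colsub F J) * det (rowsub G J)"
      unfolding det_def'[OF C] sum_distrib_right ..
    finally show "(\<Sum>q\<in>{q. q permutes ?U}. ?h (\<lambda>i. if i < k then ?s ! q i else i))
       = det (colsub F J) * det (rowsub G J)" .
  qed
  finally show ?thesis .
qed


lemma det_zero_row:
  assumes A: "A \<in> carrier_mat n n" and a: "a < n" and z: "\<And>j. j < n \<Longrightarrow> A $$ (a, j) = 0"
  shows "det A = 0"
  unfolding det_def'[OF A]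
proof (rule sum.neutral, rule ballI)
  fix p assume "p \<in> {p. p permutes {0..<n}}"
  then have "p a < n" using a permutes_in_image by fastforce
  then have "(\<Prod>i = 0..<n. A $$ (i, p i)) = 0" using a z by (intro prod_zero) (auto intro!: bexI[of _ a])
  then show "signof p * (\<Prod>i = 0..<n. A $$ (i, p i)) = 0" by simp
qed

lemma minor_delta:
  assumes K: "K \<in> nsubsets m k" and I: "I \<in> nsubsets m k"
  shows "det (mat k k (\<lambda>(a,b). if sorted_list_of_set K ! a = sorted_list_of_set I ! b then 1 else 0)
     :: 'a::comm_ring_1 mat) = (if K = I then 1 else 0)"
proof (cases "K = I")
  case True
  note KK = nsub_props[OF K]
  have "mat k k (\<lambda>(a,b). if sorted_list_of_set K ! a = sorted_list_of_set I ! b then 1 else 0) = (1\<^sub>m k :: 'a mat)"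
    by (rule eq_matI) (use True KK in \<open>auto simp: nth_eq_iff_index_eq\<close>)
  then show ?thesis using True by simp
next
  case False
  note KK = nsub_props[OF K] and II = nsub_props[OF I]
  have "\<not> K \<subseteq> I"
  proof
    assume "K \<subseteq> I"
    then have "K = I" using KK II by (metis card_subset_eq)
    with False show False by simp
  qed
  then obtain x where x: "x \<in> K" "x \<notin> I" by auto
  then obtain a where a: "a < k" "sorted_list_of_set K ! a = x"
    using KK(4,6) by (metis in_set_conv_nth)
  have "det (mat k k (\<lambda>(a,b). if sorted_list_of_set K ! a = sorted_list_of_set I ! b then 1 else 0) :: 'a mat) = 0"
  proof (rule det_zero_row[OF _ a(1)])
    fix j assume j: "j < k"
    then have "sorted_list_of_set I ! j \<in> I" using II(4,6) nth_mem by metis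
    then show "mat k k (\<lambda>(a,b). if sorted_list_of_set K ! a = sorted_list_of_set I ! b then 1 else (0::'a)) $$ (a, j) = 0"
      using a x j by auto
  qed auto
  then show ?thesis using False by simp
qed

lemma ext_inj_from_left_inverse:
  fixes \<phi> :: "(nat \<Rightarrow> 'a::comm_ring_1) \<Rightarrow> (nat \<Rightarrow> 'a)"
  assumes A: "A \<in> carrier_mat p m" and L: "L \<in> carrier_mat m p" and LA: "L * A = 1\<^sub>m m"
    and phi: "\<And>i j. i < p \<Longrightarrow> j < m \<Longrightarrow> \<phi> (Defs.unit_vec j) i = A $$ (i, j)"
  shows "inj_on (ext_map m p k \<phi>) (ext_vec m k)"
proof -
  let ?s = "sorted_list_of_set"
  let ?M = "\<lambda>J I. mat k k (\<lambda>(a,b). A $$ (?s J ! a, ?s I ! b))"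
  let ?N = "\<lambda>K J. mat k k (\<lambda>(a,b). L $$ (?s K ! a, ?s J ! b))"
  have em: "ext_map m p k \<phi> X J = (\<Sum>I\<in>nsubsets m k. X I * det (?M J I))"
    if J: "J \<in> nsubsets p k" for X J
    unfolding ext_map_def wedge_def
  proof (rule sum.cong[OF refl])
    fix I assume I: "I \<in> nsubsets m k"
    have "mat k k (\<lambda>(a, b). \<phi> (Defs.unit_vec (?s I ! b)) (?s J ! a)) = ?M J I"
      by (rule eq_matI) (use nsub_props[OF I] nsub_props[OF J] phi in auto)
    then show "X I * (if J \<in> nsubsets p k then det (mat k k (\<lambda>(a, b). \<phi> (Defs.unit_vec (?s I ! b)) (?s J ! a))) else 0)
      = X I * det (?M J I)" using J by simp
  qed
  have key: "X K = (\<Sum>J\<in>nsubsets p k. det (?N K J) * ext_map m p k \<phi> X J)"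
    if K: "K \<in> nsubsets m k" and X: "X \<in> ext_vec m k" for X K
  proof -
    note KK = nsub_props[OF K]
    have "(\<Sum>J\<in>nsubsets p k. det (?N K J) * ext_map m p k \<phi> X J)
      = (\<Sum>J\<in>nsubsets p k. \<Sum>I\<in>nsubsets m k. X I * (det (?N K J) * det (?M J I)))"
      by (rule sum.cong[OF refl]) (simp add: em sum_distrib_left ac_simps)
    also have "\<dots> = (\<Sum>I\<in>nsubsets m k. X I * (\<Sum>J\<in>nsubsets p k. det (?N K J) * det (?M J I)))"
      by (subst sum.swap) (simp add: sum_distrib_left)
    also have "\<dots> = (\<Sum>I\<in>nsubsets m k. X I * (if K = I then 1 else 0))"
    proof (rule sum.cong[OF refl])
      fix I assume I: "I \<in> nsubsets m k"
      note II = nsub_props[OF I]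
      let ?F = "rowsub L K" and ?G = "colsub A I"
      have F: "?F \<in> carrier_mat k p" using L KK unfolding rowsub_def by auto
      have G: "?G \<in> carrier_mat p k" using A II unfolding colsub_def by auto
      have 1: "colsub ?F J = ?N K J" if J: "J \<in> nsubsets p k" for J
        by (rule eq_matI) (use nsub_props[OF J] KK L in \<open>auto simp: colsub_def rowsub_def\<close>)
      have 2: "rowsub ?G J = ?M J I" if J: "J \<in> nsubsets p k" for J
        by (rule eq_matI) (use nsub_props[OF J] II A in \<open>auto simp: colsub_def rowsub_def\<close>)
      have "?F * ?G = mat k k (\<lambda>(a,b). (L * A) $$ (?s K ! a, ?s I ! b))"
        by (rule eq_matI) (use KK II L A in \<open>auto simp: colsub_def rowsub_def scalar_prod_def row_def col_def\<close>)
      also have "\<dots> = mat k k (\<lambda>(a,b). if ?s K ! a = ?s I ! b then 1 else 0)"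
        by (rule eq_matI) (use KK II LA in auto)
      finally have "det (?F * ?G) = (if K = I then 1 else 0)" using minor_delta[OF K I] by simp
      then have "(\<Sum>J\<in>nsubsets p k. det (?N K J) * det (?M J I)) = (if K = I then 1 else 0)"
        using cauchy_binet[OF F G] 1 2 by simp
      then show "X I * (\<Sum>J\<in>nsubsets p k. det (?N K J) * det (?M J I)) = X I * (if K = I then 1 else 0)"
        by simp
    qed
    also have "\<dots> = X K" using K by (simp add: nsubsets_finite if_distrib[of "\<lambda>x. X _ * x"] cong: if_cong)
    finally show ?thesis by simp
  qed
  show ?thesis
  proof (rule inj_onI)
    fix X Y assume X: "X \<in> ext_vec m k" and Y: "Y \<in> ext_vec m k"
      and e: "ext_map m p k \<phi> X = ext_map m p k \<phi> Y"
    show "X = Y"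
    proof
      fix K show "X K = Y K"
      proof (cases "K \<in> nsubsets m k")
        case True
        show ?thesis using key[OF True X] key[OF True Y] e by simp
      next
        case False
        then show ?thesis using X Y unfolding ext_vec_def by auto
      qed
    qed
  qed
qed


locale smith =
  fixes A P Pi Q Qi :: "'a::idom mat" and n m r :: nat
  assumes A: "A \<in> carrier_mat n m"
    and P: "P \<in> carrier_mat n n" and Pi: "Pi \<in> carrier_mat n n"
    and PPi: "P * Pi = 1\<^sub>m n" and PiP: "Pi * P = 1\<^sub>m n"
    and Q: "Q \<in> carrier_mat m m" and Qi: "Qi \<in> carrier_mat m m"
    and QQi: "Q * Qi = 1\<^sub>m m" and QiQ: "Qi * Q = 1\<^sub>m m"
    and diag: "\<And>i j. i < n \<Longrightarrow> j < m \<Longrightarrow> i \<noteq> j \<Longrightarrow> (P * A * Q) $$ (i, j) = 0"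
    and rm: "r \<le> m" and rn: "r \<le> n"
    and nz: "\<And>i. i < r \<Longrightarrow> (P * A * Q) $$ (i, i) \<noteq> 0"
    and zz: "\<And>i. r \<le> i \<Longrightarrow> i < min m n \<Longrightarrow> (P * A * Q) $$ (i, i) = 0"
begin

definition "B = P * A * Q"
definition "b i = B $$ (i, i)"
definition "Good v \<longleftrightarrow> (\<forall>i<r. b i dvd v $ i) \<and> (\<forall>i. r \<le> i \<and> i < n \<longrightarrow> v $ i = 0)"

lemma B: "B \<in> carrier_mat n m" unfolding B_def using P A Q by auto

lemma PAQQi: "P * A * Q * Qi = P * A"
proof -
  have "P * A * Q * Qi = P * A * (Q * Qi)"
    by (rule assoc_mult_mat[of _ n m _ m _ m]) (use P A Q Qi in auto)
  then show ?thesis using QQi P A by simp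
qed

lemma A_eq: "A = Pi * B * Qi"
proof -
  have "Pi * B * Qi = Pi * (P * A * Q) * Qi" unfolding B_def ..
  also have "\<dots> = (Pi * P) * A * (Q * Qi)"
    using P Pi A Q Qi by (simp add: assoc_mult_mat[of _ n n _ m _ m])
  also have "\<dots> = A" using PiP QQi A by simp
  finally show ?thesis by simp
qed

lemma Bv: assumes w: "w \<in> carrier_vec m" and i: "i < n"
  shows "(B *\<^sub>v w) $ i = (if i < r then b i * w $ i else 0)"
proof -
  have "(B *\<^sub>v w) $ i = (\<Sum>j<m. B $$ (i, j) * w $ j)"
    using B w i by (auto simp: scalar_prod_def lessThan_atLeast0)
  also have "\<dots> = (if i < m then B $$ (i, i) * w $ i else 0)"
  proof (cases "i < m")
    case True
    then show ?thesis
      by (subst sum.remove[of _ i]) (use diag i in \<open>auto simp: B_def intro!: sum.neutral\<close>)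
  next
    case False
    then show ?thesis using diag i by (auto simp: B_def intro!: sum.neutral)
  qed
  also have "\<dots> = (if i < r then b i * w $ i else 0)"
    using zz[of i] rm i unfolding b_def B_def by auto
  finally show ?thesis .
qed

lemma imA: assumes z: "z \<in> carrier_vec n"
  shows "(\<exists>x\<in>carrier_vec m. z = A *\<^sub>v x) \<longleftrightarrow> Good (P *\<^sub>v z)"
proof
  assume "\<exists>x\<in>carrier_vec m. z = A *\<^sub>v x"
  then obtain x where x: "x \<in> carrier_vec m" "z = A *\<^sub>v x" by auto
  have "P *\<^sub>v z = P * A * Q * Qi *\<^sub>v x"
  proof -
    have "P * A * Q * Qi = P * A" by (rule PAQQi)
    then show ?thesis using x P A by (simp add: assoc_mult_mat_vec[of _ n n _ m])
  qed
  also have "\<dots> = B *\<^sub>v (Qi *\<^sub>v x)" unfolding B_def using x P A Q Qi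
    by (simp add: assoc_mult_mat_vec[of _ n m _ m])
  finally have e: "P *\<^sub>v z = B *\<^sub>v (Qi *\<^sub>v x)" .
  have Qx: "Qi *\<^sub>v x \<in> carrier_vec m" using Qi x by auto
  show "Good (P *\<^sub>v z)" unfolding Good_def e using Bv[OF Qx] rn by auto
next
  assume g: "Good (P *\<^sub>v z)"
  let ?v = "P *\<^sub>v z"
  define w where "w = vec m (\<lambda>i. if i < r then (SOME u. ?v $ i = b i * u) else 0)"
  have w: "w \<in> carrier_vec m" unfolding w_def by auto
  have "B *\<^sub>v w = ?v"
  proof (rule eq_vecI)
    fix i assume i: "i < dim_vec ?v"
    then have i: "i < n" using P by auto
    show "(B *\<^sub>v w) $ i = ?v $ i"
    proof (cases "i < r")
      case True
      then have "\<exists>u. ?v $ i = b i * u" using g unfolding Good_def by (auto simp: dvd_def)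
      then have "?v $ i = b i * (SOME u. ?v $ i = b i * u)" by (rule someI_ex)
      then show ?thesis using Bv[OF w i] True rm unfolding w_def by auto
    next
      case False
      then show ?thesis using Bv[OF w i] g i unfolding Good_def by auto
    qed
  qed (use B P in auto)
  then have "Pi *\<^sub>v (B *\<^sub>v w) = z"
    using Pi P z PiP by (simp add: assoc_mult_mat_vec[symmetric, of _ n n _ n])
  moreover have "Pi *\<^sub>v (B *\<^sub>v w) = A *\<^sub>v (Q *\<^sub>v w)"
  proof -
    have "A *\<^sub>v (Q *\<^sub>v w) = Pi * B * Qi *\<^sub>v (Q *\<^sub>v w)" using A_eq by simp
    also have "\<dots> = Pi * B *\<^sub>v (Qi *\<^sub>v (Q *\<^sub>v w))"
      by (rule assoc_mult_mat_vec) (use Pi B Qi Q w in auto)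
    also have "Qi *\<^sub>v (Q *\<^sub>v w) = w" using Qi Q w QiQ by (simp add: assoc_mult_mat_vec[symmetric, of _ m m _ m])
    also have "Pi * B *\<^sub>v w = Pi *\<^sub>v (B *\<^sub>v w)" by (rule assoc_mult_mat_vec) (use Pi B w in auto)
    finally show ?thesis by simp
  qed
  ultimately show "\<exists>x\<in>carrier_vec m. z = A *\<^sub>v x" using Q w by (intro bexI[of _ "Q *\<^sub>v w"]) auto
qed

lemma kerA: assumes x: "x \<in> carrier_vec m"
  shows "A *\<^sub>v x = 0\<^sub>v n \<longleftrightarrow> (\<forall>i<r. (Qi *\<^sub>v x) $ i = 0)"
proof -
  have Qx: "Qi *\<^sub>v x \<in> carrier_vec m" using Qi x by auto
  have e1: "P *\<^sub>v (A *\<^sub>v x) = B *\<^sub>v (Qi *\<^sub>v x)"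
  proof -
    have "P * A * Q * Qi = P * A" by (rule PAQQi)
    then have "P *\<^sub>v (A *\<^sub>v x) = P * A * Q * Qi *\<^sub>v x" using x P A by (simp add: assoc_mult_mat_vec[of _ n n _ m])
    also have "\<dots> = B *\<^sub>v (Qi *\<^sub>v x)" unfolding B_def using x P A Q Qi
      by (simp add: assoc_mult_mat_vec[of _ n m _ m])
    finally show ?thesis .
  qed
  have "A *\<^sub>v x = 0\<^sub>v n \<longleftrightarrow> P *\<^sub>v (A *\<^sub>v x) = 0\<^sub>v n"
  proof
    assume "P *\<^sub>v (A *\<^sub>v x) = 0\<^sub>v n"
    then have "Pi *\<^sub>v (P *\<^sub>v (A *\<^sub>v x)) = 0\<^sub>v n" using Pi by auto
    then show "A *\<^sub>v x = 0\<^sub>v n" using Pi P A x PiP by (simp add: assoc_mult_mat_vec[symmetric, of _ n n _ n])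
  qed (use P in auto)
  also have "\<dots> \<longleftrightarrow> (\<forall>i<r. (Qi *\<^sub>v x) $ i = 0)"
  proof
    assume h: "P *\<^sub>v (A *\<^sub>v x) = 0\<^sub>v n"
    show "\<forall>i<r. (Qi *\<^sub>v x) $ i = 0"
    proof (intro allI impI)
      fix i assume i: "i < r"
      have "(B *\<^sub>v (Qi *\<^sub>v x)) $ i = 0" using h e1 i rn by auto
      then have "b i * (Qi *\<^sub>v x) $ i = 0" using Bv[OF Qx, of i] i rn by auto
      moreover have "b i \<noteq> 0" using nz i unfolding b_def B_def by auto
      ultimately show "(Qi *\<^sub>v x) $ i = 0" by simp
    qed
  next
    assume h: "\<forall>i<r. (Qi *\<^sub>v x) $ i = 0"
    show "P *\<^sub>v (A *\<^sub>v x) = 0\<^sub>v n" unfolding e1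
      by (rule eq_vecI) (use Bv[OF Qx] h B in auto)
  qed
  finally show ?thesis .
qed

end


definition fromv :: "nat \<Rightarrow> 'a::zero vec \<Rightarrow> nat \<Rightarrow> 'a" where
  "fromv n v = (\<lambda>i. if i < n then v $ i else 0)"

definition matof :: "nat \<Rightarrow> nat \<Rightarrow> ((nat \<Rightarrow> 'a) \<Rightarrow> (nat \<Rightarrow> 'a)) \<Rightarrow> 'a::zero_neq_one mat" where
  "matof n m \<phi> = mat n m (\<lambda>(i,j). \<phi> (Defs.unit_vec j) i)"

lemma fv1: "x \<in> fvec n \<Longrightarrow> fromv n (vec n x) = x"
  unfolding fromv_def fvec_def by (auto simp: fun_eq_iff)

lemma fv2: "v \<in> carrier_vec n \<Longrightarrow> vec n (fromv n v) = v"
  unfolding fromv_def by (auto simp: eq_vecI)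

lemma fv3[simp]: "fromv n v \<in> fvec n"
  unfolding fromv_def fvec_def by auto

lemma vec_vadd: "vec n (vadd x y) = vec n x + vec n (y :: nat \<Rightarrow> 'a::comm_ring_1)"
  unfolding vadd_def by (auto simp: eq_vecI)

lemma vec_vsmult: "vec n (vsmult c x) = c \<cdot>\<^sub>v vec n (x :: nat \<Rightarrow> 'a::comm_ring_1)"
  unfolding vsmult_def by (auto simp: eq_vecI)

lemma vec_vzero: "vec n vzero = (0\<^sub>v n :: 'a::comm_ring_1 vec)"
  unfolding vzero_def by (auto simp: eq_vecI)

lemma fvec_vadd[simp]: "x \<in> fvec n \<Longrightarrow> y \<in> fvec n \<Longrightarrow> vadd x (y :: nat \<Rightarrow> 'a::comm_ring_1) \<in> fvec n"
  unfolding fvec_def vadd_def by auto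
lemma fvec_vsmult[simp]: "x \<in> fvec n \<Longrightarrow> vsmult c (x :: nat \<Rightarrow> 'a::comm_ring_1) \<in> fvec n"
  unfolding fvec_def vsmult_def by auto
lemma fvec_vzero[simp]: "vzero \<in> fvec n"
  unfolding fvec_def vzero_def by auto
lemma fvec_unit[simp]: "j < n \<Longrightarrow> (Defs.unit_vec j :: nat \<Rightarrow> 'a::zero_neq_one) \<in> fvec n"
  unfolding fvec_def Defs.unit_vec_def by auto

lemma vec_inj: "x \<in> fvec n \<Longrightarrow> y \<in> fvec n \<Longrightarrow> vec n x = vec n y \<Longrightarrow> x = y"
  using fv1 by metis

lemma rlinear_zero:
  assumes "rlinear m n \<phi>" shows "\<phi> vzero = (vzero :: nat \<Rightarrow> 'a::comm_ring_1)"
proof -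
  have "\<phi> (vsmult 0 vzero) = vsmult 0 (\<phi> vzero)" using assms unfolding rlinear_def by auto
  moreover have "vsmult 0 (vzero :: nat \<Rightarrow> 'a) = vzero" "vsmult 0 (\<phi> vzero) = vzero"
    unfolding vsmult_def vzero_def by auto
  ultimately show ?thesis by simp
qed

lemma rlinear_sum:
  fixes \<phi> :: "(nat \<Rightarrow> 'a::comm_ring_1) \<Rightarrow> (nat \<Rightarrow> 'a)"
  assumes lin: "rlinear m n \<phi>"
  shows "k \<le> m \<Longrightarrow> (\<forall>i\<ge>k. x i = 0) \<Longrightarrow> \<phi> x = (\<lambda>i. \<Sum>j<k. x j * \<phi> (Defs.unit_vec j) i)"
proof (induction k arbitrary: x)
  case 0
  then have "x = vzero" unfolding vzero_def by auto
  then show ?case using rlinear_zero[OF lin] unfolding vzero_def by auto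
next
  case (Suc k)
  let ?x' = "x(k := 0)"
  have x': "?x' \<in> fvec m" using Suc.prems unfolding fvec_def by auto
  have u: "(Defs.unit_vec k :: nat \<Rightarrow> 'a) \<in> fvec m" using Suc.prems by simp
  have xe: "x = vadd ?x' (vsmult (x k) (Defs.unit_vec k))"
    unfolding vadd_def vsmult_def Defs.unit_vec_def by auto
  have "\<phi> x = vadd (\<phi> ?x') (vsmult (x k) (\<phi> (Defs.unit_vec k)))"
    using lin x' u unfolding rlinear_def by (subst xe) (simp del: fun_upd_apply)
  also have "\<phi> ?x' = (\<lambda>i. \<Sum>j<k. ?x' j * \<phi> (Defs.unit_vec j) i)"
    by (rule Suc.IH) (use Suc.prems in auto)
  finally show ?case unfolding vadd_def vsmult_def by auto
qed

lemma rlinear_rep: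
  assumes lin: "rlinear m n \<phi>" and x: "x \<in> fvec m"
  shows "vec n (\<phi> x) = matof n m \<phi> *\<^sub>v vec m (x :: nat \<Rightarrow> 'a::comm_ring_1)"
proof (rule eq_vecI)
  fix i assume "i < dim_vec (matof n m \<phi> *\<^sub>v vec m x)"
  then have i: "i < n" unfolding matof_def by auto
  have "\<phi> x = (\<lambda>i. \<Sum>j<m. x j * \<phi> (Defs.unit_vec j) i)"
    by (rule rlinear_sum[OF lin]) (use x in \<open>auto simp: fvec_def\<close>)
  then show "vec n (\<phi> x) $ i = (matof n m \<phi> *\<^sub>v vec m x) $ i"
    using i by (auto simp: matof_def scalar_prod_def lessThan_atLeast0 mult.commute intro!: sum.cong)
qed (auto simp: matof_def)

lemma rlinear_rep':
  assumes lin: "rlinear m n \<phi>" and x: "x \<in> fvec m"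
  shows "\<phi> x = fromv n (matof n m \<phi> *\<^sub>v vec m (x :: nat \<Rightarrow> 'a::comm_ring_1))"
proof -
  have "\<phi> x \<in> fvec n" using lin x unfolding rlinear_def by auto
  then show ?thesis using rlinear_rep[OF assms] fv1 by metis
qed

lemma matof_carrier[simp]: "matof n m \<phi> \<in> carrier_mat n m"
  unfolding matof_def by auto

lemma inv_exists:
  assumes "P \<in> carrier_mat n n" "invertible_mat (P :: 'a::comm_ring_1 mat)"
  obtains Pi where "Pi \<in> carrier_mat n n" "P * Pi = 1\<^sub>m n" "Pi * P = 1\<^sub>m n"
proof -
  from assms obtain Pi where "inverts_mat P Pi" "inverts_mat Pi P"
    unfolding invertible_mat_def by auto
  then have 1: "P * Pi = 1\<^sub>m n" and 2: "Pi * P = 1\<^sub>m (dim_row Pi)"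
    using assms unfolding inverts_mat_def by auto
  have "dim_col Pi = n" using arg_cong[OF 1, of dim_col] by simp
  moreover have "dim_row Pi = n" using arg_cong[OF 2, of dim_col] assms by simp
  ultimately show ?thesis using that 1 2 by auto
qed

lemma smith_exists:
  assumes edr: "elementary_divisor_ring TYPE('a::idom)" and A: "(A :: 'a mat) \<in> carrier_mat n m"
  obtains P Pi Q Qi r where "smith A P Pi Q Qi n m r"
    "\<And>i j. i \<le> j \<Longrightarrow> j < min m n \<Longrightarrow> (P * A * Q) $$ (i, i) dvd (P * A * Q) $$ (j, j)"
proof -
  obtain P Q where P: "P \<in> carrier_mat n n" "invertible_mat P" and Q: "Q \<in> carrier_mat m m" "invertible_mat Q"
    and diag: "\<forall>i<n. \<forall>j<m. i \<noteq> j \<longrightarrow> (P * A * Q) $$ (i, j) = 0"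
    and ch: "\<forall>i. Suc i < min n m \<longrightarrow> (P * A * Q) $$ (i, i) dvd (P * A * Q) $$ (Suc i, Suc i)"
    using edr A unfolding elementary_divisor_ring_def by blast
  obtain Pi where Pi: "Pi \<in> carrier_mat n n" "P * Pi = 1\<^sub>m n" "Pi * P = 1\<^sub>m n" using inv_exists P by blast
  obtain Qi where Qi: "Qi \<in> carrier_mat m m" "Q * Qi = 1\<^sub>m m" "Qi * Q = 1\<^sub>m m" using inv_exists Q by blast
  let ?b = "\<lambda>i. (P * A * Q) $$ (i, i)"
  have chain: "?b i dvd ?b j" if "i \<le> j" "j < min m n" for i j
    using that
  proof (induction j)
    case 0 then show ?case by simp
  next
    case (Suc j)
    show ?case
    proof (cases "i = Suc j")
      case False
      then have "?b i dvd ?b j" using Suc by auto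
      also have "?b j dvd ?b (Suc j)" using ch Suc.prems by (auto simp: min.commute)
      finally show ?thesis .
    qed simp
  qed
  define r where "r = (LEAST i. min m n \<le> i \<or> ?b i = 0)"
  have r1: "r \<le> min m n" unfolding r_def by (rule Least_le) simp
  have nz: "?b i \<noteq> 0" if "i < r" for i
    using not_less_Least[of i "\<lambda>i. min m n \<le> i \<or> ?b i = 0"] that r1 unfolding r_def by auto
  have zz: "?b i = 0" if "r \<le> i" "i < min m n" for i
  proof -
    have "min m n \<le> r \<or> ?b r = 0" unfolding r_def by (rule LeastI[of _ "min m n"]) simp
    then have "?b r = 0" using that by auto
    then show ?thesis using chain[OF that] by simp
  qed
  have "smith A P Pi Q Qi n m r"
    by unfold_locales (use A P Pi Q Qi diag r1 nz zz in auto)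
  then show ?thesis using that chain by blast
qed


lemma mat_vec_smult:
  assumes A: "(A :: 'a::comm_ring_1 mat) \<in> carrier_mat nr nc" and v: "v \<in> carrier_vec nc"
  shows "A *\<^sub>v (k \<cdot>\<^sub>v v) = k \<cdot>\<^sub>v (A *\<^sub>v v)"
  by (rule eq_vecI) (use A v in \<open>auto simp: scalar_prod_def sum_distrib_left ac_simps\<close>)

context smith
begin

lemma Pvec_smult: "y \<in> fvec n \<Longrightarrow> P *\<^sub>v vec n (vsmult c y) = c \<cdot>\<^sub>v (P *\<^sub>v vec n y)"
  unfolding vec_vsmult by (rule mat_vec_smult[OF P]) simp

lemma imphi:
  assumes lin: "rlinear m n \<phi>" and Aeq: "A = matof n m \<phi>" and y: "y \<in> fvec n"
  shows "y \<in> \<phi> ` fvec m \<longleftrightarrow> Good (P *\<^sub>v vec n y)"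
proof -
  have "y \<in> \<phi> ` fvec m \<longleftrightarrow> (\<exists>x\<in>carrier_vec m. vec n y = A *\<^sub>v x)"
  proof
    assume "y \<in> \<phi> ` fvec m"
    then obtain x where x: "x \<in> fvec m" "y = \<phi> x" by auto
    then show "\<exists>x\<in>carrier_vec m. vec n y = A *\<^sub>v x"
      using rlinear_rep[OF lin x(1)] Aeq by (intro bexI[of _ "vec m x"]) auto
  next
    assume "\<exists>x\<in>carrier_vec m. vec n y = A *\<^sub>v x"
    then obtain x where x: "x \<in> carrier_vec m" "vec n y = A *\<^sub>v x" by auto
    have "vec n (\<phi> (fromv m x)) = A *\<^sub>v x"
      using rlinear_rep[OF lin fv3[of m x]] fv2[OF x(1)] Aeq by simp
    then have "\<phi> (fromv m x) = y"
      using vec_inj[OF _ y] x lin fv3[of m x] unfolding rlinear_def by metis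
    then show "y \<in> \<phi> ` fvec m" using fv3[of m x] by blast
  qed
  also have "\<dots> \<longleftrightarrow> Good (P *\<^sub>v vec n y)"
    using imA[of "vec n y"] by simp
  finally show ?thesis .
qed

lemma Good_smult: assumes v: "v \<in> carrier_vec n" and g: "Good v" shows "Good (c \<cdot>\<^sub>v v)"
proof -
  have ix: "(c \<cdot>\<^sub>v v) $ i = c * v $ i" if "i < n" for i using v that by simp
  show ?thesis using g rn unfolding Good_def by (auto simp: ix intro: dvd_mult)
qed

lemma S_units:
  fixes d :: "'a \<Rightarrow> 'a" and \<phi> :: "(nat \<Rightarrow> 'a) \<Rightarrow> (nat \<Rightarrow> 'a)"
  assumes der: "derivation d" and S: "condition_S d"
    and dmN: "diff_module d n DN" and mor: "dm_morphism m DM n DN \<phi>"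
    and dmM: "diff_module d m DM"
    and Aeq: "A = matof n m \<phi>"
    and chain: "\<And>i j. i \<le> j \<Longrightarrow> j < min m n \<Longrightarrow> b i dvd b j"
    and i: "i < r"
  shows "b i dvd 1"
proof -
  have lin: "rlinear m n \<phi>" using mor unfolding dm_morphism_def by auto
  let ?im = "\<phi> ` fvec m"
  have r0: "0 < r" using i by simp
  define a where "a = b (r - 1)"
  have a0: "a \<noteq> 0" using nz[of "r - 1"] r0 unfolding a_def b_def B_def by auto
  have ba: "b j dvd a" if "j < r" for j unfolding a_def by (rule chain) (use that rm rn in auto)
  let ?e = "Matrix.unit_vec n (r - 1) :: 'a vec"
  have e: "?e \<in> carrier_vec n" by simp
  define y0 where "y0 = fromv n (Pi *\<^sub>v ?e)"
  have y0: "y0 \<in> fvec n" unfolding y0_def by simp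
  have Py0: "P *\<^sub>v vec n y0 = ?e"
  proof -
    have "vec n y0 = Pi *\<^sub>v ?e" unfolding y0_def by (rule fv2) (use Pi in auto)
    then have "P *\<^sub>v vec n y0 = P * Pi *\<^sub>v ?e" using P Pi by (simp add: assoc_mult_mat_vec)
    then show ?thesis using PPi by simp
  qed
  have Ge: "Good (c \<cdot>\<^sub>v ?e) \<longleftrightarrow> a dvd c" for c
  proof
    assume "Good (c \<cdot>\<^sub>v ?e)"
    then have "b (r - 1) dvd (c \<cdot>\<^sub>v ?e) $ (r - 1)" unfolding Good_def using r0 by auto
    then show "a dvd c" using r0 rn unfolding a_def by simp
  next
    assume "a dvd c"
    then show "Good (c \<cdot>\<^sub>v ?e)" unfolding Good_def using ba rn r0 by auto
  qed
  have imG: "y \<in> ?im \<longleftrightarrow> Good (P *\<^sub>v vec n y)" if "y \<in> fvec n" for y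
    by (rule imphi[OF lin Aeq that])
  have imy0: "vsmult c y0 \<in> ?im \<longleftrightarrow> a dvd c" for c
    using imG[of "vsmult c y0"] y0 Pvec_smult[OF y0] Py0 Ge by simp
  have im_sm: "vsmult c y \<in> ?im" if "y \<in> ?im" for y c
  proof -
    from that obtain x where "x \<in> fvec m" "y = \<phi> x" by auto
    then show ?thesis using lin unfolding rlinear_def by (auto intro!: image_eqI[of _ _ "vsmult c x"])
  qed
  have im_D: "DN y \<in> ?im" if "y \<in> ?im" for y
  proof -
    from that obtain x where x: "x \<in> fvec m" "y = \<phi> x" by auto
    then have "DN y = \<phi> (DM x)" using mor unfolding dm_morphism_def by auto
    moreover have "DM x \<in> fvec m" using dmM x unfolding diff_module_def by auto
    ultimately show ?thesis by auto
  qed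
  have im_diff: "w \<in> ?im" if "v \<in> ?im" "vadd w v \<in> ?im" "w \<in> fvec n" for v w
  proof -
    from that obtain x1 x2 where x: "x1 \<in> fvec m" "v = \<phi> x1" "x2 \<in> fvec m" "vadd w v = \<phi> x2" by blast
    have "w = vadd (vadd w v) (vsmult (-1) v)" unfolding vadd_def vsmult_def by auto
    also have "\<dots> = \<phi> (vadd x2 (vsmult (-1) x1))" using x lin unfolding rlinear_def by auto
    finally show ?thesis using x by auto
  qed
  have Dy0: "DN y0 \<in> fvec n" using dmN y0 unfolding diff_module_def by auto
  have leib: "DN (vsmult c y0) = vadd (vsmult (d c) y0) (vsmult c (DN y0))" for c
    using dmN y0 unfolding diff_module_def by auto
  have dsq: "d (a * a) = d a * a + a * d a" using der unfolding derivation_def by auto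
  have s1: "vsmult a y0 \<in> ?im" using imy0 by simp
  have s2: "vsmult (a * a) y0 \<in> ?im"
  proof -
    have "vsmult (a * a) y0 = vsmult a (vsmult a y0)" unfolding vsmult_def by (auto simp: ac_simps)
    then show ?thesis using im_sm[OF s1] by simp
  qed
  have s3: "vsmult (a * a) (DN y0) \<in> ?im"
  proof (rule im_diff[of "vsmult (d (a * a)) y0"])
    show "vsmult (d (a * a)) y0 \<in> ?im" using imy0 dsq by simp
    show "vadd (vsmult (a * a) (DN y0)) (vsmult (d (a * a)) y0) \<in> ?im"
      using im_D[OF s2] leib[of "a * a"] by (simp add: vadd_def add.commute)
  qed (use Dy0 in simp)
  have s4: "vsmult a (DN y0) \<in> ?im"
  proof -
    let ?u = "P *\<^sub>v vec n (DN y0)"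
    have u: "?u \<in> carrier_vec n" using P by auto
    have "Good ((a * a) \<cdot>\<^sub>v ?u)" using s3 imG[of "vsmult (a * a) (DN y0)"] Dy0 Pvec_smult[OF Dy0] by simp
    then have h: "\<forall>i. r \<le> i \<and> i < n \<longrightarrow> ((a * a) \<cdot>\<^sub>v ?u) $ i = 0" unfolding Good_def by blast
    have ix: "(c \<cdot>\<^sub>v ?u) $ j = c * ?u $ j" if "j < n" for c j by (rule index_smult_vec(1)) (use P that in simp)
    have g1: "b j dvd (a \<cdot>\<^sub>v ?u) $ j" if j: "j < r" for j
      using ba[OF j] ix[of j a] j rn by (auto intro: dvd_mult2)
    have g2: "(a \<cdot>\<^sub>v ?u) $ j = 0" if j: "r \<le> j" "j < n" for j
    proof -
      have "(a * a) * ?u $ j = 0" using h j ix[of j] by auto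
      then show ?thesis using a0 ix[of j] j by auto
    qed
    have "Good (a \<cdot>\<^sub>v ?u)" unfolding Good_def using g1 g2 by blast
    then show ?thesis using imG[of "vsmult a (DN y0)"] Dy0 Pvec_smult[OF Dy0] by simp
  qed
  have s5: "vsmult (d a) y0 \<in> ?im"
    by (rule im_diff[OF s4]) (use im_D[OF s1] leib[of a] y0 in auto)
  have ada: "a dvd d a" using s5 imy0 by simp
  let ?I = "{a * s | s. True}"
  have "d ` ?I \<subseteq> ?I"
  proof
    fix z assume "z \<in> d ` ?I"
    then obtain s where z: "z = d (a * s)" by auto
    then have "z = d a * s + a * d s" using der unfolding derivation_def by auto
    moreover obtain t where "d a = a * t" using ada by (auto elim: dvdE)
    ultimately have "z = a * (t * s + d s)" by (simp add: algebra_simps)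
    then show "z \<in> ?I" by auto
  qed
  then have "?I = {0} \<or> ?I = UNIV" using S unfolding condition_S_def Let_def by blast
  moreover have "a * 1 \<in> ?I" by blast
  ultimately have "?I = UNIV" using a0 by auto
  then have "1 \<in> ?I" by auto
  then have "a dvd 1" by (auto simp: dvd_def)
  then show ?thesis using ba[OF i] by (rule dvd_trans[rotated])
qed

end


definition sh :: "nat \<Rightarrow> nat \<Rightarrow> (nat \<Rightarrow> 'a::zero) \<Rightarrow> 'a vec" where
  "sh r N c = vec N (\<lambda>t. if r \<le> t then c (t - r) else 0)"

lemma sh_carrier[simp]: "sh r N c \<in> carrier_vec N" unfolding sh_def by simp
lemma dim_sh[simp]: "dim_vec (sh r N c) = N" unfolding sh_def by simp

lemma sum_shift_zero:
  fixes f :: "nat \<Rightarrow> 'a::comm_monoid_add"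
  assumes "r \<le> N" "\<And>t. t < r \<Longrightarrow> f t = 0"
  shows "(\<Sum>t<N. f t) = (\<Sum>j<N - r. f (j + r))"
proof -
  have "(\<Sum>t<N. f t) = sum f {0..<r} + sum f {r..<N}"
    using assms(1) by (simp add: lessThan_atLeast0 sum.atLeastLessThan_concat)
  also have "sum f {0..<r} = 0" using assms(2) by simp
  also have "sum f {r..<N} = sum f {0 + r..<(N - r) + r}" using assms(1) by simp
  also have "\<dots> = (\<Sum>j = 0..<N - r. f (j + r))" by (rule sum.shift_bounds_nat_ivl)
  finally show ?thesis by (simp add: lessThan_atLeast0)
qed

lemma lincomb_fvec: "(\<And>j. j < k \<Longrightarrow> B j \<in> fvec N) \<Longrightarrow> lincomb k c B \<in> fvec N"
  unfolding lincomb_def fvec_def by auto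

lemma mat_sh:
  assumes M: "(M :: 'a::comm_ring_1 mat) \<in> carrier_mat N' N" and r: "r \<le> N"
  shows "vec N' (lincomb (N - r) c (\<lambda>j. fromv N' (col M (r + j)))) = M *\<^sub>v sh r N c"
proof (rule eq_vecI)
  fix i assume "i < dim_vec (M *\<^sub>v sh r N c)"
  then have i: "i < N'" using M by simp
  have "(M *\<^sub>v sh r N c) $ i = (\<Sum>t<N. M $$ (i, t) * (if r \<le> t then c (t - r) else 0))"
    using M i by (simp add: scalar_prod_def sh_def lessThan_atLeast0)
  also have "\<dots> = (\<Sum>j<N - r. M $$ (i, j + r) * c j)"
    by (subst sum_shift_zero[OF r]) auto
  also have "\<dots> = vec N' (lincomb (N - r) c (\<lambda>j. fromv N' (col M (r + j)))) $ i"
    using M i by (auto simp: lincomb_def fromv_def ac_simps intro!: sum.cong)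
  finally show "vec N' (lincomb (N - r) c (\<lambda>j. fromv N' (col M (r + j)))) $ i = (M *\<^sub>v sh r N c) $ i" ..
qed (use M in simp)

context smith
begin

context
  fixes \<phi> :: "(nat \<Rightarrow> 'a) \<Rightarrow> (nat \<Rightarrow> 'a)"
  assumes lin: "rlinear m n \<phi>" and Aeq: "A = matof n m \<phi>" and units: "\<And>i. i < r \<Longrightarrow> b i dvd 1"
begin

lemma vphi: "x \<in> fvec m \<Longrightarrow> vec n (\<phi> x) = A *\<^sub>v vec m x"
  using rlinear_rep[OF lin] Aeq by simp

lemma phi_fvec: "x \<in> fvec m \<Longrightarrow> \<phi> x \<in> fvec n"
  using lin unfolding rlinear_def by auto

lemma Good_units: "v \<in> carrier_vec n \<Longrightarrow> Good v \<longleftrightarrow> (\<forall>i. r \<le> i \<and> i < n \<longrightarrow> v $ i = 0)"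
  unfolding Good_def using units by (auto intro: dvd_trans[OF units one_dvd])

definition "Kb j = fromv m (col Q (r + j))"

lemma ker_basis:
  shows "\<forall>j<m - r. Kb j \<in> dm_kernel m \<phi>"
    and "\<forall>c. lincomb (m - r) c Kb = vzero \<longrightarrow> (\<forall>i<m - r. c i = 0)"
    and "\<forall>x\<in>dm_kernel m \<phi>. \<exists>c. x = lincomb (m - r) c Kb"
proof -
  have lc: "vec m (lincomb (m - r) c Kb) = Q *\<^sub>v sh r m c" for c
    unfolding Kb_def by (rule mat_sh[OF Q rm])
  show "\<forall>j<m - r. Kb j \<in> dm_kernel m \<phi>"
  proof (intro allI impI)
    fix j assume j: "j < m - r"
    have c: "col Q (r + j) \<in> carrier_vec m" using Q j by auto
    have "Qi *\<^sub>v col Q (r + j) = Matrix.unit_vec m (r + j)"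
      using col_mult2[OF Qi Q, of "r + j"] QiQ j by simp
    then have "A *\<^sub>v col Q (r + j) = 0\<^sub>v n" using kerA[OF c] j rm by simp
    then have "vec n (\<phi> (Kb j)) = vec n vzero"
      using vphi[of "Kb j"] fv2[OF c] unfolding Kb_def vec_vzero by simp
    then have "\<phi> (Kb j) = vzero" using vec_inj[OF phi_fvec[of "Kb j"] fvec_vzero] unfolding Kb_def by simp
    then show "Kb j \<in> dm_kernel m \<phi>" unfolding dm_kernel_def Kb_def by simp
  qed
  show "\<forall>c. lincomb (m - r) c Kb = vzero \<longrightarrow> (\<forall>i<m - r. c i = 0)"
  proof (intro allI impI)
    fix c i assume z: "lincomb (m - r) c Kb = vzero" and i: "i < m - r"
    have "Q *\<^sub>v sh r m c = 0\<^sub>v m" using lc[of c] z vec_vzero by metis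
    then have "Qi *\<^sub>v (Q *\<^sub>v sh r m c) = 0\<^sub>v m"
      by (simp, intro eq_vecI) (use Qi in \<open>auto simp: scalar_prod_def\<close>)
    then have "sh r m c = 0\<^sub>v m" using Qi Q QiQ by (simp add: assoc_mult_mat_vec[symmetric, of _ m m _ m])
    then have "sh r m c $ (r + i) = 0" using i by simp
    then show "c i = 0" using i unfolding sh_def by simp
  qed
  show "\<forall>x\<in>dm_kernel m \<phi>. \<exists>c. x = lincomb (m - r) c Kb"
  proof
    fix x assume "x \<in> dm_kernel m \<phi>"
    then have x: "x \<in> fvec m" "\<phi> x = vzero" unfolding dm_kernel_def by auto
    have xv: "vec m x \<in> carrier_vec m" by simp
    have "A *\<^sub>v vec m x = 0\<^sub>v n" using vphi[OF x(1)] x(2) vec_vzero by metis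
    then have z: "\<forall>i<r. (Qi *\<^sub>v vec m x) $ i = 0" using kerA[OF xv] by simp
    let ?u = "Qi *\<^sub>v vec m x"
    define c where "c j = ?u $ (r + j)" for j
    have "sh r m c = ?u"
    proof (rule eq_vecI)
      fix i assume "i < dim_vec ?u"
      then have i: "i < m" using Qi by simp
      show "sh r m c $ i = ?u $ i"
      proof (cases "r \<le> i")
        case True then show ?thesis using i by (simp add: sh_def c_def)
      next
        case False then show ?thesis using z[rule_format, of i] i by (simp add: sh_def)
      qed
    qed (use Qi in simp)
    then have "vec m (lincomb (m - r) c Kb) = Q *\<^sub>v ?u" using lc by simp
    also have "\<dots> = vec m x" using Q Qi QQi by (simp add: assoc_mult_mat_vec[symmetric, of _ m m _ m])
    finally have vq: "vec m (lincomb (m - r) c Kb) = vec m x" .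
    have lf: "lincomb (m - r) c Kb \<in> fvec m" by (rule lincomb_fvec) (simp add: Kb_def)
    have "lincomb (m - r) c Kb = x" by (rule vec_inj[OF lf x(1) vq])
    then show "\<exists>c. x = lincomb (m - r) c Kb" by metis
  qed
qed

lemma kernel_free: "free_submodule (dm_kernel m \<phi>)"
  unfolding free_submodule_def using ker_basis by blast

definition "Cb j = fromv n (col Pi (r + j))"

lemma cokernel_free: "free_cokernel m n \<phi>"
  unfolding free_cokernel_def
proof (intro exI[of _ "n - r"] exI[of _ Cb] conjI)
  have lc: "vec n (lincomb (n - r) c Cb) = Pi *\<^sub>v sh r n c" for c
    unfolding Cb_def by (rule mat_sh[OF Pi rn])
  have lcf: "lincomb (n - r) c Cb \<in> fvec n" for c by (rule lincomb_fvec) (simp add: Cb_def)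
  have imG: "y \<in> \<phi> ` fvec m \<longleftrightarrow> Good (P *\<^sub>v vec n y)" if "(y :: nat \<Rightarrow> 'a) \<in> fvec n" for y
    by (rule imphi[OF lin Aeq that])
  have Psh: "P *\<^sub>v vec n (lincomb (n - r) c Cb) = sh r n c" for c
    using lc[of c] P Pi PPi by (simp add: assoc_mult_mat_vec[symmetric, of _ n n _ n])
  show "\<forall>i<n - r. Cb i \<in> fvec n" by (simp add: Cb_def)
  show "\<forall>y\<in>fvec n. \<exists>c. \<exists>x\<in>fvec m. y = vadd (lincomb (n - r) c Cb) (\<phi> x)"
  proof
    fix y :: "nat \<Rightarrow> 'a" assume y: "y \<in> fvec n"
    let ?v = "P *\<^sub>v vec n y"
    define c where "c j = ?v $ (r + j)" for j
    let ?l = "lincomb (n - r) c Cb"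
    define z where "z = vadd y (vsmult (-1) ?l)"
    have z: "z \<in> fvec n" unfolding z_def using y lcf by simp
    have "P *\<^sub>v vec n z = ?v + (-1) \<cdot>\<^sub>v sh r n c"
    proof -
      have "vec n z = vec n y + (-1) \<cdot>\<^sub>v vec n ?l" unfolding z_def vec_vadd vec_vsmult ..
      then have "P *\<^sub>v vec n z = P *\<^sub>v vec n y + P *\<^sub>v ((-1) \<cdot>\<^sub>v vec n ?l)"
        using P by (simp add: mult_add_distrib_mat_vec[of _ n n])
      also have "P *\<^sub>v ((-1) \<cdot>\<^sub>v vec n ?l) = (-1) \<cdot>\<^sub>v (P *\<^sub>v vec n ?l)"
        by (rule mat_vec_smult[OF P]) simp
      finally show ?thesis using Psh by simp
    qed
    then have "Good (P *\<^sub>v vec n z)"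
    proof -
      have "(?v + (-1) \<cdot>\<^sub>v sh r n c) $ i = 0" if i: "r \<le> i" "i < n" for i
      proof -
        have "(?v + (-1) \<cdot>\<^sub>v sh r n c) $ i = ?v $ i + (-1) * sh r n c $ i"
          using P i by simp
        also have "sh r n c $ i = ?v $ i" using i unfolding sh_def c_def by simp
        finally show ?thesis by simp
      qed
      moreover have "?v + (-1) \<cdot>\<^sub>v sh r n c \<in> carrier_vec n" using P by simp
      ultimately show ?thesis using Good_units \<open>P *\<^sub>v vec n z = ?v + (-1) \<cdot>\<^sub>v sh r n c\<close> by simp
    qed
    then obtain x where x: "x \<in> fvec m" "z = \<phi> x" using imG[OF z] by auto
    have "y = vadd ?l z" unfolding z_def vadd_def vsmult_def by auto
    then show "\<exists>c. \<exists>x\<in>fvec m. y = vadd (lincomb (n - r) c Cb) (\<phi> x)" using x by blast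
  qed
  show "\<forall>c. lincomb (n - r) c Cb \<in> \<phi> ` fvec m \<longrightarrow> (\<forall>i<n - r. c i = 0)"
  proof (intro allI impI)
    fix c i assume h: "lincomb (n - r) c Cb \<in> \<phi> ` fvec m" and i: "i < n - r"
    then have "Good (sh r n c)" using imG[OF lcf] Psh by simp
    then have "sh r n c $ (r + i) = 0" using Good_units[of "sh r n c"] i by simp
    then show "c i = 0" using i unfolding sh_def by simp
  qed
qed

lemma inj_r: assumes inj: "inj_on \<phi> (fvec m)" shows "r = m"
proof (rule ccontr)
  assume "r \<noteq> m"
  then have k: "0 < m - r" using rm by simp
  have "Kb 0 \<in> dm_kernel m \<phi>" using ker_basis(1) k by blast
  then have K: "Kb 0 \<in> fvec m" and K': "\<phi> (Kb 0) = vzero"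
    unfolding dm_kernel_def by blast+
  have e: "\<phi> (Kb 0) = \<phi> vzero" unfolding K' rlinear_zero[OF lin] ..
  have K0: "Kb 0 = vzero" using inj_onD[OF inj e K fvec_vzero] .
  let ?c = "\<lambda>j. if j = 0 then 1 else (0::'a)"
  have "lincomb (m - r) ?c Kb = Kb 0"
    unfolding lincomb_def
  proof
    fix j
    have "(\<Sum>i<m - r. ?c i * Kb i j) = (\<Sum>i<m - r. if i = 0 then Kb i j else 0)"
      by (rule sum.cong) simp_all
    also have "\<dots> = Kb 0 j" using k by (subst sum.delta) simp_all
    finally show "(\<Sum>i<m - r. ?c i * Kb i j) = Kb 0 j" .
  qed
  then have "lincomb (m - r) ?c Kb = vzero" using K0 by simp
  then have "?c 0 = 0" using ker_basis(2)[rule_format, of ?c 0] k by simp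
  then show False by simp
qed

lemma surj_r: assumes "r = n" "y \<in> fvec n" shows "\<exists>x\<in>fvec m. \<phi> x = y"
proof -
  have "P *\<^sub>v vec n y \<in> carrier_vec n" using P by simp
  moreover have "\<forall>i. r \<le> i \<and> i < n \<longrightarrow> (P *\<^sub>v vec n y) $ i = 0" using assms(1) by auto
  ultimately have "Good (P *\<^sub>v vec n y)" using Good_units by blast
  then show ?thesis using imphi[OF lin Aeq assms(2)] by auto
qed

lemma left_inv: assumes rm': "r = m" shows "\<exists>L. L \<in> carrier_mat m n \<and> L * A = 1\<^sub>m m"
proof -
  define u where "u i = (SOME u. 1 = b i * u)" for i
  have bu: "b i * u i = 1" if "i < r" for i
  proof -
    have "\<exists>u. 1 = b i * u" using units[OF that] by (auto simp: dvd_def)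
    then show ?thesis unfolding u_def by (metis (mono_tags, lifting) someI_ex)
  qed
  define Bi where "Bi = mat m n (\<lambda>(i,j). if i = j then u i else 0)"
  have Bi: "Bi \<in> carrier_mat m n" unfolding Bi_def by simp
  have BiB: "Bi * B = 1\<^sub>m m"
  proof (rule eq_matI)
    fix i j assume ij: "i < dim_row (1\<^sub>m m :: 'a mat)" "j < dim_col (1\<^sub>m m :: 'a mat)"
    then have i: "i < m" "j < m" by auto
    have "(Bi * B) $$ (i, j) = (\<Sum>l<n. Bi $$ (i, l) * B $$ (l, j))"
      using Bi B i by (simp add: scalar_prod_def lessThan_atLeast0)
    also have "\<dots> = Bi $$ (i, i) * B $$ (i, j)"
      using i rm' rn by (subst sum.remove[of _ i]) (auto simp: Bi_def intro!: sum.neutral)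
    also have "\<dots> = (1\<^sub>m m :: 'a mat) $$ (i, j)"
    proof (cases "i = j")
      case True then show ?thesis using bu[of i] i rm' rn by (simp add: Bi_def b_def mult.commute)
    next
      case False then show ?thesis using diag[of i j] i rm' rn by (simp add: Bi_def B_def)
    qed
    finally show "(Bi * B) $$ (i, j) = (1\<^sub>m m :: 'a mat) $$ (i, j)" .
  qed (use Bi B in auto)
  have PA: "P * A = B * Qi" unfolding B_def using PAQQi by simp
  define L where "L = Q * Bi * P"
  have "L * A = Q * Bi * (P * A)"
    unfolding L_def by (rule assoc_mult_mat[of _ m n _ n _ m]) (use Q Bi P A in auto)
  also have "\<dots> = Q * Bi * (B * Qi)" using PA by simp
  also have "\<dots> = Q * (Bi * (B * Qi))"
    by (rule assoc_mult_mat[of _ m m _ n _ m]) (use Q Bi B Qi in auto)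
  also have "Bi * (B * Qi) = (Bi * B) * Qi"
    by (rule assoc_mult_mat[symmetric, of _ m n _ m _ m]) (use Bi B Qi in auto)
  also have "\<dots> = Qi" using BiB Qi by simp
  finally have "L * A = 1\<^sub>m m" using QQi by simp
  moreover have "L \<in> carrier_mat m n" unfolding L_def using Q Bi P by auto
  ultimately show ?thesis by blast
qed

end

end


lemma main_facts:
  fixes d :: "'a::idom \<Rightarrow> 'a" and \<phi> :: "(nat \<Rightarrow> 'a) \<Rightarrow> (nat \<Rightarrow> 'a)"
  assumes der: "derivation d" and PP: "property_P d"
    and dmM: "diff_module d m DM" and dmN: "diff_module d n DN" and mor: "dm_morphism m DM n DN \<phi>"
  shows "free_submodule (dm_kernel m \<phi>) \<and> free_cokernel m n \<phi> \<and>
    (inj_on \<phi> (fvec m) \<longrightarrow> (\<exists>L. L \<in> carrier_mat m n \<and> L * matof n m \<phi> = 1\<^sub>m m)) \<and>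
    (inj_on \<phi> (fvec m) \<longrightarrow> m = n \<longrightarrow> (\<forall>y\<in>fvec n. \<exists>x\<in>fvec m. \<phi> x = y))"
proof -
  have edr: "elementary_divisor_ring TYPE('a)" and S: "condition_S d"
    using PP unfolding property_P_def by auto
  have lin: "rlinear m n \<phi>" using mor unfolding dm_morphism_def by auto
  obtain P Pi Q Qi r where sm: "smith (matof n m \<phi>) P Pi Q Qi n m r"
    and ch: "\<And>i j. i \<le> j \<Longrightarrow> j < min m n \<Longrightarrow>
      (P * matof n m \<phi> * Q) $$ (i, i) dvd (P * matof n m \<phi> * Q) $$ (j, j)"
    using smith_exists[OF edr matof_carrier] by blast
  interpret smith "matof n m \<phi>" P Pi Q Qi n m r by (rule sm)
  have units: "b i dvd 1" if "i < r" for i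
    by (rule S_units[OF der S dmN mor dmM refl _ that]) (use ch in \<open>simp add: b_def B_def\<close>)
  have 1: "free_submodule (dm_kernel m \<phi>)" by (rule kernel_free[OF lin refl units])
  have 2: "free_cokernel m n \<phi>" by (rule cokernel_free[OF lin refl units])
  have 3: "\<exists>L. L \<in> carrier_mat m n \<and> L * matof n m \<phi> = 1\<^sub>m m" if "inj_on \<phi> (fvec m)"
    using left_inv[OF lin refl units inj_r[OF lin refl units that]] by blast
  have 4: "\<forall>y\<in>fvec n. \<exists>x\<in>fvec m. \<phi> x = y" if "inj_on \<phi> (fvec m)" "m = n"
    using surj_r[OF lin refl units] inj_r[OF lin refl units that(1)] that(2) by blast
  show ?thesis using 1 2 3 4 by blast
qed

theorem lemma3p4:
  fixes d :: "'a::idom \<Rightarrow> 'a"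
  assumes "derivation d" and "property_P d"
  shows
    "(\<forall>m DM n DN (\<phi> :: (nat \<Rightarrow> 'a) \<Rightarrow> (nat \<Rightarrow> 'a)).
        diff_module d m DM \<and> diff_module d n DN \<and> dm_morphism m DM n DN \<phi> \<longrightarrow>
        free_submodule (dm_kernel m \<phi>) \<and> free_cokernel m n \<phi>)
   \<and> (\<forall>m DM DN (\<phi> :: (nat \<Rightarrow> 'a) \<Rightarrow> (nat \<Rightarrow> 'a)).
        diff_module d m DM \<and> diff_module d m DN \<and> dm_morphism m DM m DN \<phi> \<and> inj_on \<phi> (fvec m) \<longrightarrow>
        (\<exists>\<psi>. dm_morphism m DN m DM \<psi> \<and> (\<forall>x\<in>fvec m. \<psi> (\<phi> x) = x) \<and> (\<forall>y\<in>fvec m. \<phi> (\<psi> y) = y)))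
   \<and> (\<forall>m DM p DN (\<phi> :: (nat \<Rightarrow> 'a) \<Rightarrow> (nat \<Rightarrow> 'a)) k.
        diff_module d m DM \<and> diff_module d p DN \<and> dm_morphism m DM p DN \<phi> \<and> inj_on \<phi> (fvec m) \<longrightarrow>
        inj_on (ext_map m p k \<phi>) (ext_vec m k))"
proof (intro conjI allI impI; elim conjE)
  fix m DM n DN and \<phi> :: "(nat \<Rightarrow> 'a) \<Rightarrow> (nat \<Rightarrow> 'a)"
  assume "diff_module d m DM" "diff_module d n DN" "dm_morphism m DM n DN \<phi>"
  then show "free_submodule (dm_kernel m \<phi>)" "free_cokernel m n \<phi>"
    using main_facts[OF assms] by blast+
next
  fix m DM p DN k and \<phi> :: "(nat \<Rightarrow> 'a) \<Rightarrow> (nat \<Rightarrow> 'a)"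
  assume dm: "diff_module d m DM" "diff_module d p DN" "dm_morphism m DM p DN \<phi>" and inj: "inj_on \<phi> (fvec m)"
  then obtain L where L: "L \<in> carrier_mat m p" "L * matof p m \<phi> = 1\<^sub>m m"
    using main_facts[OF assms dm] by blast
  show "inj_on (ext_map m p k \<phi>) (ext_vec m k)"
    by (rule ext_inj_from_left_inverse[OF matof_carrier L]) (simp add: matof_def)
next
  fix m DM DN and \<phi> :: "(nat \<Rightarrow> 'a) \<Rightarrow> (nat \<Rightarrow> 'a)"
  assume dmM: "diff_module d m DM" and dmN: "diff_module d m DN" and mor: "dm_morphism m DM m DN \<phi>"
    and inj: "inj_on \<phi> (fvec m)"
  have surj: "\<forall>y\<in>fvec m. \<exists>x\<in>fvec m. \<phi> x = y"
    using main_facts[OF assms dmM dmN mor] inj by blast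
  have lin: "rlinear m m \<phi>" using mor unfolding dm_morphism_def by auto
  have pf: "\<phi> x \<in> fvec m" if "x \<in> fvec m" for x using lin that unfolding rlinear_def by auto
  define \<psi> where "\<psi> y = (SOME x. x \<in> fvec m \<and> \<phi> x = y)" for y
  have ps: "\<psi> y \<in> fvec m \<and> \<phi> (\<psi> y) = y" if "y \<in> fvec m" for y
  proof -
    have "\<exists>x. x \<in> fvec m \<and> \<phi> x = y" using surj that by blast
    then show ?thesis unfolding \<psi>_def by (rule someI_ex)
  qed
  have eq: "a = b" if "a \<in> fvec m" "b \<in> fvec m" "\<phi> a = \<phi> b" for a b
    using inj that unfolding inj_on_def by blast
  have psphi: "\<psi> (\<phi> x) = x" if "x \<in> fvec m" for x
    using ps[OF pf[OF that]] that eq by blast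
  have "rlinear m m \<psi>"
    unfolding rlinear_def
  proof (intro conjI ballI allI)
    fix x :: "nat \<Rightarrow> 'a" assume "x \<in> fvec m" then show "\<psi> x \<in> fvec m" using ps by blast
  next
    fix x y :: "nat \<Rightarrow> 'a" assume x: "x \<in> fvec m" and y: "y \<in> fvec m"
    have "\<phi> (vadd (\<psi> x) (\<psi> y)) = vadd x y" using lin ps[OF x] ps[OF y] unfolding rlinear_def by auto
    then show "\<psi> (vadd x y) = vadd (\<psi> x) (\<psi> y)"
      using eq ps[OF fvec_vadd[OF x y]] ps[OF x] ps[OF y] by (metis fvec_vadd)
  next
    fix r :: 'a and x :: "nat \<Rightarrow> 'a" assume x: "x \<in> fvec m"
    have "\<phi> (vsmult r (\<psi> x)) = vsmult r x" using lin ps[OF x] unfolding rlinear_def by auto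
    then show "\<psi> (vsmult r x) = vsmult r (\<psi> x)"
      using eq ps[OF fvec_vsmult[OF x]] ps[OF x] by (metis fvec_vsmult)
  qed
  moreover have "\<psi> (DN y) = DM (\<psi> y)" if y: "y \<in> fvec m" for y
  proof -
    have Dy: "DN y \<in> fvec m" using dmN y unfolding diff_module_def by auto
    have Dp: "DM (\<psi> y) \<in> fvec m" using dmM ps[OF y] unfolding diff_module_def by auto
    have "\<phi> (DM (\<psi> y)) = DN (\<phi> (\<psi> y))" using mor ps[OF y] unfolding dm_morphism_def by auto
    also have "\<dots> = DN y" using ps[OF y] by simp
    also have "\<dots> = \<phi> (\<psi> (DN y))" using ps[OF Dy] by simp
    finally show ?thesis using eq[OF Dp, of "\<psi> (DN y)"] ps[OF Dy] by simp
  qed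
  ultimately have "dm_morphism m DN m DM \<psi>" unfolding dm_morphism_def by blast
  then show "\<exists>\<psi>. dm_morphism m DN m DM \<psi> \<and> (\<forall>x\<in>fvec m. \<psi> (\<phi> x) = x) \<and> (\<forall>y\<in>fvec m. \<phi> (\<psi> y) = y)"
    using psphi ps by blast
qed


end
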